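(* Let $b\ge g$ be positive integers, $m=b+g$, and let $W$ be a binary-input channel, with level-$n$ channels $L_n^{(i)}$, $R_n^{(j)}$ as defined in the context. Then for all $n\ge1$: $I(L_{n+1}^{(i)})\le I(L_n^{(i)})$ for all $1\le i\le b$; $I(R_{n+1}^{(1)})\ge I(R_n^{(g)})$; and $I(R_{n+1}^{(j)})\ge I(R_n^{(j-1)})$ for all $1<j\le g$.
   Context: A binary-input channel $V\colon\{0,1\}\to\mathcal{Z}$ is a family of transition probabilities $V(z\mid x)$ on a discrete output alphabet; its symmetric capacity $I(V)$ is the mutual information (in bits) between a uniform input in $\{0,1\}$ and the output. Circuit associated with a pattern: a pattern is a word $\sigma=(\sigma_1,\dots,\sigma_m)\in\{L,R\}^m$ with $\sigma_1=L$ and $\sigma_m=R$. Choose distinct real numbers $p_1,\dots,p_{m-1}$ such that for $2\le k\le m-1$, $p_k<p_{k-1}$ if $\sigma_k=L$ and $p_k>p_{k-1}$ if $\sigma_k=R$. The map $u\mapsto x$ on $\{0,1\}^m$ is: start with $x=u$ and, for $k\in\{1,\dots,m-1\}$ taken in increasing order of $p_k$, replace $x_k$ by $x_k+x_{k+1}$ (mod 2). (The resulting map depends only on $\sigma$.) Given binary-input channels $V_1,\dots,V_m$, let $U_1,\dots,U_m$ be i.i.d. uniform on $\{0,1\}$, $X=x(U)$, and $Z_k$ the output of $V_k$ with input $X_k$, independently across $k$. The $k$-th synthesized channel is the channel from $U_k$ to $(Z_1,\dots,Z_m,U_1,\dots,U_{k-1})$; line $k$ is said to be of type $\sigma_k$.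 Pattern used (since $g\le b$): $\sigma=L^{b-g}(LR)^g$. Level-1 channels: apply the circuit with $V_1=\dots=V_m=W$; $L_1^{(i)}$ is the synthesized channel at the $i$-th line (from the top) of type $L$, and $R_1^{(j)}$ the one at the $j$-th line of type $R$. Level $n+1$ from level $n$: apply the same circuit with $(V_1,\dots,V_m)$ equal to the ordered list $R_n^{(g)}$, then $L_n^{(1)},\dots,L_n^{(b-g+1)}$, then the pairs $R_n^{(j)},L_n^{(b-g+1+j)}$ for $j=1,\dots,g-1$ (independent uses), and label the outputs $L_{n+1}^{(i)},R_{n+1}^{(j)}$ in the same way. *)

theory Defs
  imports "HOL-Probability.Probability_Mass_Function" "HOL-Analysis.Infinite_Sum"
begin

text \<open>Bits are booleans (False = 0, True = 1); addition mod 2 is (\<noteq>).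
  A binary-input channel with output alphabet 'a is a map bool \<Rightarrow> 'a pmf.\<close>

type_synonym 'a channel = "bool \<Rightarrow> 'a pmf"

text \<open>Symmetric capacity: mutual information (in bits) between a uniform input and
  the output, written out (0 log 0 = 0 is automatic since 0 * _ = 0).\<close>
definition sym_cap :: "'a channel \<Rightarrow> real" where
  "sym_cap V = (\<Sum>\<^sub>\<infinity> z. (\<Sum>x\<in>(UNIV::bool set).
      pmf (V x) z / 2 * log 2 (pmf (V x) z / ((pmf (V False) z + pmf (V True) z) / 2))))"

text \<open>Universal output alphabet for iterated synthesized channels: a base output
  of the original channel, or a tuple (Z_1..Z_m, U_1..U_{k-1}).\<close>
datatype 'z chout = Base 'z | Node "'z chout list" "bool list"

definition lift_channel :: "'z channel \<Rightarrow> 'z chout channel" where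
  "lift_channel W = (\<lambda>x. map_pmf Base (W x))"

datatype LR = L | R

text \<open>Positions are 1-based; sigma ! (k-1) is the type of line k.
  A concrete valid choice of the p_k: p_1 = 0, p_k = -k if sigma_k = L, p_k = k if R.\<close>
definition pval :: "LR list \<Rightarrow> nat \<Rightarrow> int" where
  "pval \<sigma> k = (if k = 1 then 0 else if \<sigma> ! (k - 1) = L then - int k else int k)"

definition circuit_step :: "nat \<Rightarrow> bool list \<Rightarrow> bool list" where
  "circuit_step k x = x[k - 1 := (x ! (k - 1) \<noteq> x ! k)]"

definition circuit :: "LR list \<Rightarrow> bool list \<Rightarrow> bool list" where
  "circuit \<sigma> u = fold circuit_step (sort_key (pval \<sigma>) [1..<length \<sigma>]) u"

fun seq_pmf :: "'a pmf list \<Rightarrow> 'a list pmf" where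
  "seq_pmf [] = return_pmf []"
| "seq_pmf (p # ps) = bind_pmf p (\<lambda>x. bind_pmf (seq_pmf ps) (\<lambda>xs. return_pmf (x # xs)))"

definition uniform_bits :: "nat \<Rightarrow> bool list pmf" where
  "uniform_bits n = pmf_of_set {us. length us = n}"

text \<open>k-th synthesized channel (k 1-based): from U_k to (Z_1..Z_m, U_1..U_{k-1}),
  with the other U_i i.i.d. uniform and Z_j the output of V_j on X_j.\<close>
definition synth :: "LR list \<Rightarrow> 'z chout channel list \<Rightarrow> nat \<Rightarrow> 'z chout channel" where
  "synth \<sigma> Vs k = (\<lambda>a.
     bind_pmf (uniform_bits (k - 1)) (\<lambda>pre.
     bind_pmf (uniform_bits (length \<sigma> - k)) (\<lambda>suf.
       let x = circuit \<sigma> (pre @ [a] @ suf)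
       in map_pmf (\<lambda>zs. Node zs pre) (seq_pmf (map2 (\<lambda>V xi. V xi) Vs x)))))"

definition apply_circuit :: "LR list \<Rightarrow> 'z chout channel list \<Rightarrow>
    'z chout channel list \<times> 'z chout channel list" where
  "apply_circuit \<sigma> Vs =
     (map (synth \<sigma> Vs) (filter (\<lambda>k. \<sigma> ! (k - 1) = L) [1..<length \<sigma> + 1]),
      map (synth \<sigma> Vs) (filter (\<lambda>k. \<sigma> ! (k - 1) = R) [1..<length \<sigma> + 1]))"

definition pattern :: "nat \<Rightarrow> nat \<Rightarrow> LR list" where
  "pattern b g = replicate (b - g) L @ concat (replicate g [L, R])"

text \<open>Input list for the next level (1-based notation of the paper):
  R^(g), L^(1..b-g+1), then R^(j), L^(b-g+1+j) for j = 1..g-1.\<close>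
definition next_inputs :: "nat \<Rightarrow> nat \<Rightarrow> 'c list \<times> 'c list \<Rightarrow> 'c list" where
  "next_inputs b g LRs = (let Ls = fst LRs; Rs = snd LRs in
     [Rs ! (g - 1)] @ map (\<lambda>i. Ls ! (i - 1)) [1..<b - g + 2]
     @ concat (map (\<lambda>j. [Rs ! (j - 1), Ls ! (b - g + j)]) [1..<g]))"

text \<open>Level 0 is an auxiliary device with every
  channel equal to W, so that next_inputs of level 0 is the all-W list and
  level 1 is exactly the circuit applied to W,...,W.\<close>
primrec level :: "nat \<Rightarrow> nat \<Rightarrow> 'z channel \<Rightarrow> nat \<Rightarrow>
    'z chout channel list \<times> 'z chout channel list" where
  "level b g W 0 = (replicate b (lift_channel W), replicate g (lift_channel W))"
| "level b g W (Suc n) = apply_circuit (pattern b g) (next_inputs b g (level b g W n))"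

definition Lch :: "nat \<Rightarrow> nat \<Rightarrow> 'z channel \<Rightarrow> nat \<Rightarrow> nat \<Rightarrow> 'z chout channel" where
  "Lch b g W n i = fst (level b g W n) ! (i - 1)"

definition Rch :: "nat \<Rightarrow> nat \<Rightarrow> 'z channel \<Rightarrow> nat \<Rightarrow> nat \<Rightarrow> 'z chout channel" where
  "Rch b g W n j = snd (level b g W n) ! (j - 1)"

end

theory Submission
  imports Defs
begin


definition tt :: "real \<Rightarrow> real \<Rightarrow> real" where
  "tt a b = a / 2 * log 2 (a / ((a + b) / 2)) + b / 2 * log 2 (b / ((a + b) / 2))"

lemma sym_cap_tt: "sym_cap V = (\<Sum>\<^sub>\<infinity> z. tt (pmf (V False) z) (pmf (V True) z))"
  unfolding sym_cap_def tt_def by (simp add: UNIV_bool add.commute)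

lemma tt_sym: "tt a b = tt b a"
  unfolding tt_def by (simp add: add.commute)

lemma ln_lb: "(x::real) > 0 \<Longrightarrow> 1 - 1 / x \<le> ln x"
  using ln_le_minus_one[of "1/x"] by (simp add: ln_div)

lemma key_lb:
  fixes a P m M :: real
  assumes "0 \<le> a" "a \<le> P" "0 \<le> m" "0 < M" "a > 0 \<Longrightarrow> m > 0"
  shows "a - m * P / M \<le> a * (ln (a / m) - ln (P / M))"
proof (cases "a = 0")
  case True then show ?thesis using assms by simp
next
  case False
  then have a: "a > 0" "m > 0" "P > 0" using assms by auto
  have "ln (a / m) - ln (P / M) = ln ((a * M) / (m * P))"
    using a assms by (simp add: ln_div ln_mult)
  moreover have "1 - 1 / ((a * M) / (m * P)) \<le> ln ((a * M) / (m * P))"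
    by (rule ln_lb) (use a assms in simp)
  ultimately have "a * (1 - 1 / ((a * M) / (m * P))) \<le> a * (ln (a / m) - ln (P / M))"
    using a by (simp add: mult_left_mono)
  moreover have "a * (1 - 1 / ((a * M) / (m * P))) = a - m * P / M"
    using a assms by (simp add: field_simps)
  ultimately show ?thesis by simp
qed

lemma share_le_tt:
  fixes a b P Q :: real
  assumes "0 \<le> a" "a \<le> P" "0 \<le> b" "b \<le> Q"
  shows "a / 2 * log 2 (P / ((P + Q) / 2)) + b / 2 * log 2 (Q / ((P + Q) / 2)) \<le> tt a b"
proof (cases "a + b = 0")
  case True then have "a = 0" "b = 0" using assms by auto
  then show ?thesis by (simp add: tt_def)
next
  case False
  define m where "m = (a+b)/2"
  define M where "M = (P+Q)/2"
  have m: "m > 0" using assms False by (simp add: m_def)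
  have M: "M > 0" using assms False by (simp add: M_def)
  have 1: "a - m * P / M \<le> a * (ln (a / m) - ln (P / M))"
    by (rule key_lb) (use assms m M in auto)
  have 2: "b - m * Q / M \<le> b * (ln (b / m) - ln (Q / M))"
    by (rule key_lb) (use assms m M in auto)
  have 3: "(a - m * P / M) + (b - m * Q / M) = 0"
    using M by (simp add: m_def M_def field_simps)
  have 4: "0 \<le> a * (ln (a / m) - ln (P / M)) + b * (ln (b / m) - ln (Q / M))"
    using 1 2 3 by linarith
  have l2: "ln 2 > (0::real)" by simp
  have "tt a b - (a / 2 * log 2 (P / M) + b / 2 * log 2 (Q / M))
        = (a * (ln (a / m) - ln (P / M)) + b * (ln (b / m) - ln (Q / M))) / (2 * ln 2)"
    unfolding tt_def log_def m_def[symmetric] using l2 by (simp add: field_simps)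
  also have "\<dots> \<ge> 0" using 4 l2 by simp
  finally show ?thesis unfolding M_def by simp
qed

lemma tt_nonneg:
  assumes "0 \<le> a" "0 \<le> b" shows "0 \<le> tt a b"
proof (cases "a + b = 0")
  case True then have "a = 0" "b = 0" using assms by auto
  then show ?thesis by (simp add: tt_def)
next
  case False
  then have eq: "(a + b) / ((a + b + (a + b)) / 2) = 1" by simp
  have h: "a/2*log 2 ((a+b)/((a+b+(a+b))/2)) + b/2*log 2 ((a+b)/((a+b+(a+b))/2)) \<le> tt a b"
    by (rule share_le_tt) (use assms in auto)
  then show ?thesis by (simp only: eq log_one)
qed

lemma tt_le:
  assumes "0 \<le> a" "0 \<le> b" shows "tt a b \<le> (a + b) / 2"
proof (cases "a + b = 0")
  case True then have "a = 0" "b = 0" using assms by auto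
  then show ?thesis by (simp add: tt_def)
next
  case False
  have m: "(a+b)/2 > 0" using assms False by simp
  have 1: "a / 2 * log 2 (a / ((a + b) / 2)) \<le> a / 2"
  proof (cases "a = 0")
    case False
    have "log 2 (a / ((a + b) / 2)) \<le> log 2 2"
      using m False assms by (subst log_le_cancel_iff) (auto simp: field_simps)
    then show ?thesis using assms by (simp add: mult_left_le)
  qed simp
  have 2: "b / 2 * log 2 (b / ((a + b) / 2)) \<le> b / 2"
  proof (cases "b = 0")
    case False
    have "log 2 (b / ((a + b) / 2)) \<le> log 2 2"
      using m False assms by (subst log_le_cancel_iff) (auto simp: field_simps)
    then show ?thesis using assms by (simp add: mult_left_le)
  qed simp
  show ?thesis using 1 2 unfolding tt_def by simp
qed

lemma tt_mult:
  assumes "0 \<le> c" shows "tt (c * a) (c * b) = c * tt a b"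
proof (cases "c = 0")
  case False
  then have "c > 0" using assms by simp
  have e: "c * a + c * b = c * (a + b)" by algebra
  have "c * a / ((c * a + c * b) / 2) = a / ((a + b) / 2)"
            "c * b / ((c * a + c * b) / 2) = b / ((a + b) / 2)"
    unfolding e using \<open>c > 0\<close> by simp_all
  then show ?thesis unfolding tt_def by (simp add: field_simps)
qed (simp add: tt_def)



lemma pmf_summable: "pmf p summable_on A"
proof -
  have "Infinite_Set_Sum.abs_summable_on (pmf p) A" by (rule pmf_abs_summable)
  then have "Infinite_Sum.abs_summable_on (pmf p) A" using abs_summable_equivalent by blast
  then show ?thesis using summable_on_iff_abs_summable_on_real by blast
qed

lemma infsum_pmf: "infsum (pmf p) A = measure p A"
proof -
  have "Infinite_Set_Sum.abs_summable_on (pmf p) A" by (rule pmf_abs_summable)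
  then show ?thesis using measure_pmf_conv_infsetsum infsetsum_infsum by metis
qed

lemma pmf_map_infsum: "pmf (map_pmf f p) z = infsum (pmf p) (f -` {z})"
  by (simp add: pmf_map infsum_pmf)

lemma tt_summable: "(\<lambda>z. tt (pmf p z) (pmf q z)) summable_on A"
proof (rule summable_on_comparison_test)
  have "(\<lambda>z. (pmf p z + pmf q z) * (1/2)) summable_on A"
    by (intro summable_on_cmult_left summable_on_add pmf_summable)
  then show "(\<lambda>z. (pmf p z + pmf q z) / 2) summable_on A" by simp
  show "tt (pmf p z) (pmf q z) \<le> (pmf p z + pmf q z) / 2" for z by (rule tt_le) auto
  show "0 \<le> tt (pmf p z) (pmf q z)" for z by (rule tt_nonneg) auto
qed

lemma dpi: "sym_cap (\<lambda>a. map_pmf f (V a)) \<le> sym_cap V"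
proof -
  define p where "p = pmf (V False)"
  define q where "q = pmf (V True)"
  define P where "P = pmf (map_pmf f (V False))"
  define Q where "Q = pmf (map_pmf f (V True))"
  define t where "t y = tt (p y) (q y)" for y
  define B where "B z = f -` {z}" for z
  have Pz: "P z = infsum p (B z)" for z unfolding P_def p_def B_def by (rule pmf_map_infsum)
  have Qz: "Q z = infsum q (B z)" for z unfolding Q_def q_def B_def by (rule pmf_map_infsum)
  have pP: "p y \<le> P (f y)" for y
  proof -
    have "p y = measure (V False) {y}" unfolding p_def by (simp add: measure_pmf_single)
    also have "\<dots> \<le> measure (V False) (f -` {f y})" by (rule measure_pmf.finite_measure_mono) auto
    finally show ?thesis unfolding P_def by (simp add: pmf_map)
  qed
  have qQ: "q y \<le> Q (f y)" for y
  proof -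
    have "q y = measure (V True) {y}" unfolding q_def by (simp add: measure_pmf_single)
    also have "\<dots> \<le> measure (V True) (f -` {f y})" by (rule measure_pmf.finite_measure_mono) auto
    finally show ?thesis unfolding Q_def by (simp add: pmf_map)
  qed
  have step: "tt (P z) (Q z) \<le> infsum t (B z)" for z
  proof -
    define \<alpha> where "\<alpha> = log 2 (P z / ((P z + Q z) / 2)) / 2"
    define \<beta> where "\<beta> = log 2 (Q z / ((P z + Q z) / 2)) / 2"
    have "tt (P z) (Q z) = P z * \<alpha> + Q z * \<beta>" unfolding tt_def \<alpha>_def \<beta>_def by simp
    also have "\<dots> = infsum (\<lambda>y. p y * \<alpha>) (B z) + infsum (\<lambda>y. q y * \<beta>) (B z)"
      unfolding Pz Qz by (simp add: infsum_cmult_left p_def q_def pmf_summable)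
    also have "\<dots> = infsum (\<lambda>y. p y * \<alpha> + q y * \<beta>) (B z)"
      by (rule infsum_add[symmetric]) (auto simp: p_def q_def intro!: summable_on_cmult_left pmf_summable)
    also have "\<dots> \<le> infsum t (B z)"
    proof (rule infsum_mono)
      show "(\<lambda>y. p y * \<alpha> + q y * \<beta>) summable_on B z"
        by (auto simp: p_def q_def intro!: summable_on_add summable_on_cmult_left pmf_summable)
      show "t summable_on B z" unfolding t_def p_def q_def by (rule tt_summable)
      fix y assume "y \<in> B z"
      then have fy: "f y = z" by (simp add: B_def)
      show "p y * \<alpha> + q y * \<beta> \<le> t y"
        using share_le_tt[of "p y" "P z" "q y" "Q z"] pP[of y] qQ[of y] fy
        unfolding t_def \<alpha>_def \<beta>_def by (simp add: p_def q_def)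
    qed
    finally show ?thesis .
  qed
  have inj: "inj (\<lambda>y. (f y, y))" by (auto simp: inj_def)
  have SB: "Sigma UNIV B = (\<lambda>y. (f y, y)) ` UNIV" by (auto simp: B_def)
  have sumS: "(\<lambda>(z, y). t y) summable_on Sigma UNIV B"
    unfolding SB using inj by (subst summable_on_reindex) (auto simp: o_def t_def p_def q_def tt_summable)
  have tot: "infsum (\<lambda>z. infsum t (B z)) UNIV = infsum t UNIV"
  proof -
    have "infsum (\<lambda>z. infsum t (B z)) UNIV = infsum (\<lambda>(z, y). t y) (Sigma UNIV B)"
      using infsum_Sigma'_banach[OF sumS] by simp
    also have "\<dots> = infsum t UNIV"
      unfolding SB using inj by (subst infsum_reindex) (auto simp: o_def)
    finally show ?thesis .
  qed
  have "sym_cap (\<lambda>a. map_pmf f (V a)) = infsum (\<lambda>z. tt (P z) (Q z)) UNIV"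
    by (simp add: sym_cap_tt P_def Q_def)
  also have "\<dots> \<le> infsum (\<lambda>z. infsum t (B z)) UNIV"
  proof (rule infsum_mono)
    show "(\<lambda>z. tt (P z) (Q z)) summable_on UNIV" unfolding P_def Q_def by (rule tt_summable)
    show "(\<lambda>z. infsum t (B z)) summable_on UNIV"
      using summable_on_Sigma_banach[OF sumS] by simp
  qed (rule step)
  also have "\<dots> = sym_cap V" using tot unfolding sym_cap_tt t_def[abs_def] p_def q_def by simp
  finally show ?thesis .
qed



lemma pmf_bind_pair:
  "pmf (bind_pmf S (\<lambda>s. map_pmf (Pair s) (K s))) (s, y) = pmf S s * pmf (K s) y"
proof -
  have "pmf (bind_pmf S (\<lambda>s. map_pmf (Pair s) (K s))) (s, y)
      = measure_pmf.expectation S (\<lambda>s'. pmf (map_pmf (Pair s') (K s')) (s, y))"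
    by (simp add: pmf_bind)
  also have "(\<lambda>s'. pmf (map_pmf (Pair s') (K s')) (s, y)) = (\<lambda>s'. indicator {s} s' * pmf (K s) y)"
  proof
    fix s'
    show "pmf (map_pmf (Pair s') (K s')) (s, y) = indicator {s} s' * pmf (K s) y"
    proof (cases "s' = s")
      case True
      then show ?thesis using pmf_map_inj'[of "Pair s" "K s" y] by (simp add: inj_on_def)
    next
      case False
      then have "(s, y) \<notin> set_pmf (map_pmf (Pair s') (K s'))" by auto
      then show ?thesis using False by (simp add: set_pmf_eq)
    qed
  qed
  also have "measure_pmf.expectation S (\<lambda>s'. indicator {s} s' * pmf (K s) y) = pmf S s * pmf (K s) y"
    by (simp add: measure_pmf_single)
  finally show ?thesis .
qed

lemma side_info_cap:
  "sym_cap (\<lambda>a. bind_pmf S (\<lambda>s. map_pmf (Pair s) (V (c s \<noteq> a)))) = sym_cap V"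
proof -
  define tV where "tV y = tt (pmf (V False) y) (pmf (V True) y)" for y
  have trm: "tt (pmf (bind_pmf S (\<lambda>s. map_pmf (Pair s) (V (c s \<noteq> False)))) z)
                 (pmf (bind_pmf S (\<lambda>s. map_pmf (Pair s) (V (c s \<noteq> True)))) z)
        = (\<lambda>(s, y). pmf S s * tV y) z" for z
  proof (cases z)
    case (Pair s y)
    show ?thesis unfolding Pair pmf_bind_pair
      by (cases "c s") (simp_all add: tt_mult tV_def tt_sym)
  qed
  have sV: "tV summable_on UNIV" unfolding tV_def by (rule tt_summable)
  have hs: "((\<lambda>y. pmf S s * tV y) has_sum (pmf S s * sym_cap V)) UNIV" for s
    using has_sum_cmult_right[OF has_sum_infsum[OF sV], of "pmf S s"]
    by (simp add: sym_cap_tt tV_def[abs_def])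
  have gs: "(\<lambda>s. pmf S s * sym_cap V) summable_on UNIV"
    by (intro summable_on_cmult_left pmf_summable)
  have sum2: "(\<lambda>(s, y). pmf S s * tV y) summable_on Sigma UNIV (\<lambda>_. UNIV)"
    by (rule summable_on_SigmaI[OF _ gs]) (use hs in \<open>auto intro!: mult_nonneg_nonneg tt_nonneg simp: tV_def\<close>)
  have "sym_cap (\<lambda>a. bind_pmf S (\<lambda>s. map_pmf (Pair s) (V (c s \<noteq> a))))
      = infsum (\<lambda>(s, y). pmf S s * tV y) UNIV"
    unfolding sym_cap_tt trm by simp
  also have "\<dots> = infsum (\<lambda>(s, y). pmf S s * tV y) (Sigma UNIV (\<lambda>_. UNIV))" by simp
  also have "\<dots> = infsum (\<lambda>s. infsum (\<lambda>y. pmf S s * tV y) UNIV) UNIV"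
    using infsum_Sigma'_banach[of "\<lambda>s y. pmf S s * tV y"] sum2 by simp
  also have "\<dots> = infsum (\<lambda>s. pmf S s * sym_cap V) UNIV"
    using hs by (intro infsum_cong) (simp add: infsumI)
  also have "\<dots> = infsum (pmf S) UNIV * sym_cap V"
    by (simp add: infsum_cmult_left pmf_summable)
  also have "\<dots> = sym_cap V" by (simp add: infsum_pmf)
  finally show ?thesis .
qed



lemma seq_pmf_nth: "i < length ps \<Longrightarrow> map_pmf (\<lambda>zs. zs ! i) (seq_pmf ps) = ps ! i"
proof (induction ps arbitrary: i)
  case Nil then show ?case by simp
next
  case (Cons p ps)
  show ?case
  proof (cases i)
    case 0
    then show ?thesis by (simp add: map_bind_pmf bind_return_pmf' bind_pmf_const)
  next
    case (Suc j)
    then have "j < length ps" using Cons by simp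
    then show ?thesis using Cons.IH[of j] Suc
      by (simp add: map_bind_pmf bind_pmf_const map_pmf_def[symmetric] bind_map_pmf[symmetric]
          map_pmf_comp)
  qed
qed

lemma seq_pmf_update:
  "i < length ps \<Longrightarrow> seq_pmf (ps[i := q]) = bind_pmf (seq_pmf ps) (\<lambda>zs. map_pmf (\<lambda>y. zs[i := y]) q)"
proof (induction ps arbitrary: i)
  case Nil then show ?case by simp
next
  case (Cons p ps)
  show ?case
  proof (cases i)
    case 0
    have "seq_pmf ((p # ps)[i := q]) = bind_pmf q (\<lambda>x. bind_pmf (seq_pmf ps) (\<lambda>xs. return_pmf (x # xs)))"
      using 0 by simp
    also have "\<dots> = bind_pmf (seq_pmf ps) (\<lambda>xs. bind_pmf q (\<lambda>x. return_pmf (x # xs)))"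
      by (rule bind_commute_pmf)
    also have "\<dots> = bind_pmf (seq_pmf (p # ps)) (\<lambda>zs. map_pmf (\<lambda>y. zs[i := y]) q)"
      using 0 by (simp add: bind_assoc_pmf bind_return_pmf bind_pmf_const map_pmf_def)
    finally show ?thesis .
  next
    case (Suc j)
    then have j: "j < length ps" using Cons by simp
    have "seq_pmf ((p # ps)[i := q]) = bind_pmf p (\<lambda>x. bind_pmf (seq_pmf (ps[j := q])) (\<lambda>xs. return_pmf (x # xs)))"
      using Suc by simp
    also have "\<dots> = bind_pmf p (\<lambda>x. bind_pmf (seq_pmf ps) (\<lambda>zs. bind_pmf q (\<lambda>y. return_pmf (x # zs[j := y]))))"
      unfolding Cons.IH[OF j] by (simp add: bind_assoc_pmf bind_return_pmf map_pmf_def)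
    also have "\<dots> = bind_pmf (seq_pmf (p # ps)) (\<lambda>zs. map_pmf (\<lambda>y. zs[i := y]) q)"
      using Suc by (simp add: bind_assoc_pmf bind_return_pmf map_pmf_def)
    finally show ?thesis .
  qed
qed

definition coin :: "bool pmf" where "coin = pmf_of_set UNIV"

lemma fin_bits: "finite {us :: bool list. length us = n}"
  using finite_lists_length_eq[of "UNIV::bool set" n] by simp

lemma card_bits: "card {us :: bool list. length us = n} = 2 ^ n"
  using card_lists_length_eq[of "UNIV::bool set" n] by simp

lemma ne_bits: "{us :: bool list. length us = n} \<noteq> {}"
  by (metis (mono_tags) empty_iff length_replicate mem_Collect_eq)

lemma set_uniform_bits: "set_pmf (uniform_bits n) = {us. length us = n}"
  unfolding uniform_bits_def
  by (rule set_pmf_of_set[OF ne_bits fin_bits])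

lemma pmf_uniform_bits: "pmf (uniform_bits n) xs = (if length xs = n then 1 / 2 ^ n else 0)"
  unfolding uniform_bits_def
  by (subst pmf_of_set[OF ne_bits fin_bits]) (auto simp: card_bits)

lemma uniform_bits_Suc:
  "uniform_bits (Suc n) = bind_pmf coin (\<lambda>b. map_pmf (Cons b) (uniform_bits n))"
proof (rule pmf_eqI)
  fix xs :: "bool list"
  have inj: "inj (Cons b)" for b :: bool by (auto simp: inj_def)
  have m: "pmf (map_pmf (Cons b) (uniform_bits n)) xs
          = (case xs of [] \<Rightarrow> 0 | x # xs' \<Rightarrow> (if x = b then pmf (uniform_bits n) xs' else 0))" for b
  proof (cases xs)
    case Nil
    then have "xs \<notin> set_pmf (map_pmf (Cons b) (uniform_bits n))" by auto
    then show ?thesis using Nil by (simp add: set_pmf_eq)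
  next
    case (Cons x xs')
    show ?thesis
    proof (cases "x = b")
      case True then show ?thesis using Cons pmf_map_inj'[OF inj[of b]] by simp
    next
      case False
      then have "xs \<notin> set_pmf (map_pmf (Cons b) (uniform_bits n))" using Cons by auto
      then show ?thesis using Cons False by (simp add: set_pmf_eq)
    qed
  qed
  show "pmf (uniform_bits (Suc n)) xs = pmf (bind_pmf coin (\<lambda>b. map_pmf (Cons b) (uniform_bits n))) xs"
    unfolding coin_def
    by (subst pmf_bind_pmf_of_set) (auto simp: m pmf_uniform_bits UNIV_bool split: list.split)
qed

lemma coin_shift: "bind_pmf coin (\<lambda>b. f (b \<noteq> c)) = bind_pmf coin f"
proof (rule pmf_eqI)
  fix x
  show "pmf (bind_pmf coin (\<lambda>b. f (b \<noteq> c))) x = pmf (bind_pmf coin f) x"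
    unfolding coin_def
    by (cases c) (simp_all add: pmf_bind_pmf_of_set UNIV_bool)
qed



definition before :: "'a list \<Rightarrow> 'a \<Rightarrow> 'a \<Rightarrow> bool" where
  "before os a b \<longleftrightarrow> (\<exists>xs ys. os = xs @ ys \<and> a \<in> set xs \<and> b \<in> set ys)"

lemma before_set: "before os a b \<Longrightarrow> a \<in> set os \<and> b \<in> set os"
  unfolding before_def by auto

lemma before_snoc: "before (os @ [i]) a b \<longleftrightarrow> before os a b \<or> (a \<in> set os \<and> b = i)"
proof
  assume "before (os @ [i]) a b"
  then obtain xs ys where h: "os @ [i] = xs @ ys" "a \<in> set xs" "b \<in> set ys" unfolding before_def by blast
  show "before os a b \<or> (a \<in> set os \<and> b = i)"
  proof (cases ys rule: rev_cases)
    case Nil then show ?thesis using h by simp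
  next
    case (snoc ys' y)
    then have "os = xs @ ys'" "y = i" using h by auto
    then show ?thesis using h snoc unfolding before_def by auto
  qed
next
  assume "before os a b \<or> (a \<in> set os \<and> b = i)"
  then show "before (os @ [i]) a b"
  proof
    assume "before os a b"
    then obtain xs ys where "os = xs @ ys" "a \<in> set xs" "b \<in> set ys" unfolding before_def by blast
    then show ?thesis unfolding before_def by (rule_tac x=xs in exI, rule_tac x="ys @ [i]" in exI) auto
  next
    assume "a \<in> set os \<and> b = i"
    then show ?thesis unfolding before_def by (rule_tac x=os in exI, rule_tac x="[i]" in exI) auto
  qed
qed

lemma length_circuit_step[simp]: "length (circuit_step k x) = length x"
  by (simp add: circuit_step_def)

lemma length_fold_circuit_step[simp]: "length (fold circuit_step os x) = length x"
  by (induction os arbitrary: x) auto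

lemma length_circuit[simp]: "length (circuit \<sigma> u) = length u"
  by (simp add: circuit_def)

lemma fold_char:
  assumes "distinct os" "\<forall>k\<in>set os. 1 \<le> k \<and> k < length u"
  shows "\<forall>s < length u. fold circuit_step os u ! s =
     (u ! s \<noteq> (Suc s \<in> set os \<and> (if Suc (Suc s) \<in> set os \<and> before os (Suc (Suc s)) (Suc s)
                                    then fold circuit_step os u ! Suc s else u ! Suc s)))"
  using assms
proof (induction os rule: rev_induct)
  case Nil then show ?case by (simp add: before_def)
next
  case (snoc i os)
  define y where "y = fold circuit_step os u"
  have IH: "\<forall>s < length u. y ! s =
     (u ! s \<noteq> (Suc s \<in> set os \<and> (if Suc (Suc s) \<in> set os \<and> before os (Suc (Suc s)) (Suc s)
                                    then y ! Suc s else u ! Suc s)))"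
    using snoc by (simp add: y_def)
  have i: "1 \<le> i" "i < length u" "i \<notin> set os" using snoc.prems by auto
  have ly: "length y = length u" by (simp add: y_def)
  have fe: "fold circuit_step (os @ [i]) u = y[i - 1 := (y ! (i - 1) \<noteq> y ! i)]"
    by (simp add: y_def circuit_step_def)
  show ?case
  proof (intro allI impI)
    fix s assume s: "s < length u"
    define y' where "y' = y[i - 1 := (y ! (i - 1) \<noteq> y ! i)]"
    have y'i: "y' ! t = (if t = i - 1 then (y ! (i - 1) \<noteq> y ! i) else y ! t)" if "t < length u" for t
      using that ly i by (simp add: y'_def nth_list_update)
    show "fold circuit_step (os @ [i]) u ! s =
       (u ! s \<noteq> (Suc s \<in> set (os @ [i]) \<and>
         (if Suc (Suc s) \<in> set (os @ [i]) \<and> before (os @ [i]) (Suc (Suc s)) (Suc s)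
          then fold circuit_step (os @ [i]) u ! Suc s else u ! Suc s)))"
    proof (cases "s = i - 1")
      case True
      then have si: "Suc s = i" using i by simp
      have yi1: "y ! (i - 1) = u ! (i - 1)" using IH[rule_format, of "i - 1"] i si by simp
      have bef: "before (os @ [i]) (Suc i) i \<longleftrightarrow> Suc i \<in> set os"
        using before_snoc[of os i "Suc i" i] before_set[of os "Suc i" i] i by auto
      have yi: "Suc i \<notin> set os \<Longrightarrow> y ! i = u ! i"
        using IH[rule_format, of i] i by auto
      show ?thesis unfolding fe y'_def[symmetric] using y'i[of s] y'i[of i] s si yi1 bef yi i
        by auto
    next
      case False
      have Ss: "Suc s \<in> set (os @ [i]) \<longleftrightarrow> Suc s \<in> set os" using False i by auto
      have bef: "before (os @ [i]) (Suc (Suc s)) (Suc s) \<longleftrightarrow> before os (Suc (Suc s)) (Suc s)"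
        using before_snoc[of os i "Suc (Suc s)" "Suc s"] False i by auto
      have cond: "(Suc (Suc s) \<in> set (os @ [i]) \<and> before (os @ [i]) (Suc (Suc s)) (Suc s))
                 \<longleftrightarrow> (Suc (Suc s) \<in> set os \<and> before os (Suc (Suc s)) (Suc s))"
        using bef before_set[of os "Suc (Suc s)" "Suc s"] by auto
      have val: "Suc (Suc s) \<in> set os \<and> before os (Suc (Suc s)) (Suc s) \<Longrightarrow> y' ! Suc s = y ! Suc s"
      proof -
        assume a: "Suc (Suc s) \<in> set os \<and> before os (Suc (Suc s)) (Suc s)"
        then have "Suc s \<in> set os" using before_set[of os "Suc (Suc s)" "Suc s"] by blast
        then have "Suc s < length u" "Suc s \<noteq> i - 1"
          using snoc.prems a i by (auto simp: Suc_le_eq)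
        then show ?thesis using y'i by simp
      qed
      show ?thesis unfolding fe y'_def[symmetric] Ss cond
        using y'i[of s] s False IH[rule_format, of s] val by auto
    qed
  qed
qed

lemma sorted_before:
  fixes key :: "'a \<Rightarrow> 'b::linorder"
  assumes "inj_on key (set xs)" "a \<in> set xs" "b \<in> set xs" "a \<noteq> b"
  shows "before (sort_key key xs) a b \<longleftrightarrow> key a < key b"
proof -
  define os where "os = sort_key key xs"
  have so: "sorted (map key os)" by (simp add: os_def)
  have st: "set os = set xs" by (simp add: os_def)
  have le: "before os c d \<Longrightarrow> key c \<le> key d" for c d
  proof -
    assume "before os c d"
    then obtain us vs where "os = us @ vs" "c \<in> set us" "d \<in> set vs" unfolding before_def by blast
    then show ?thesis using so by (auto simp: sorted_append)
  qed
  have tot: "before os a b \<or> before os b a"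
  proof -
    obtain us vs where sp: "os = us @ a # vs" using assms st split_list by metis
    then have "b \<in> set us \<or> b \<in> set vs" using assms st by auto
    then show ?thesis
    proof
      assume "b \<in> set us" then have "before os b a" unfolding before_def sp by (rule_tac x=us in exI) auto
      then show ?thesis by simp
    next
      assume "b \<in> set vs" then have "before os a b" unfolding before_def sp
        by (rule_tac x="us @ [a]" in exI) auto
      then show ?thesis by simp
    qed
  qed
  have ne: "key a \<noteq> key b" using assms inj_on_eq_iff by metis
  show ?thesis unfolding os_def[symmetric] using le[of a b] le[of b a] tot ne by auto
qed

lemma pval_inj: "inj_on (pval \<sigma>) {1..<m}"
  unfolding inj_on_def pval_def by auto

lemma circ_rec:
  assumes "length u = length \<sigma>" "s < length \<sigma>"
  shows "circuit \<sigma> u ! s = (u ! s \<noteq> (Suc s < length \<sigma> \<and>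
            (if Suc (Suc s) < length \<sigma> \<and> \<sigma> ! Suc s = L then circuit \<sigma> u ! Suc s else u ! Suc s)))"
proof -
  define os where "os = sort_key (pval \<sigma>) [1..<length \<sigma>]"
  have d: "distinct os" "\<forall>k\<in>set os. 1 \<le> k \<and> k < length u" using assms by (auto simp: os_def)
  have setos: "set os = {1..<length \<sigma>}" by (simp add: os_def)
  have bef: "Suc (Suc s) < length \<sigma> \<Longrightarrow> before os (Suc (Suc s)) (Suc s) \<longleftrightarrow> \<sigma> ! Suc s = L"
  proof -
    assume a: "Suc (Suc s) < length \<sigma>"
    have "before os (Suc (Suc s)) (Suc s) \<longleftrightarrow> pval \<sigma> (Suc (Suc s)) < pval \<sigma> (Suc s)"
      unfolding os_def by (rule sorted_before) (use a pval_inj in auto)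
    also have "\<dots> \<longleftrightarrow> \<sigma> ! Suc s = L" by (cases "\<sigma> ! Suc s") (auto simp: pval_def)
    finally show ?thesis .
  qed
  have "circuit \<sigma> u = fold circuit_step os u" by (simp add: circuit_def os_def)
  then show ?thesis using fold_char[OF d, rule_format, of s] assms setos bef
    by (auto simp: Suc_le_eq)
qed



lemma circ_flip:
  assumes lu: "length u = length \<sigma>" and k: "Suc k < length \<sigma>" and L: "\<sigma> ! k = L"
  shows "circuit \<sigma> (u[k := \<not> u ! k, Suc k := \<not> u ! Suc k])
       = (circuit \<sigma> u)[Suc k := \<not> (circuit \<sigma> u ! Suc k)]"
proof -
  define m where "m = length \<sigma>"
  define u' where "u' = u[k := \<not> u ! k, Suc k := \<not> u ! Suc k]"
  define x where "x = circuit \<sigma> u"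
  define x' where "x' = circuit \<sigma> u'"
  have lu': "length u' = m" using lu by (simp add: u'_def m_def)
  have u'n: "u' ! t = (if t = k \<or> t = Suc k then \<not> u ! t else u ! t)" if "t < m" for t
    using that lu k by (auto simp: u'_def m_def nth_list_update)
  have rx: "x ! s = (u ! s \<noteq> (Suc s < m \<and> (if Suc (Suc s) < m \<and> \<sigma> ! Suc s = L then x ! Suc s else u ! Suc s)))"
    if "s < m" for s using circ_rec[OF lu, of s] that by (simp add: x_def m_def)
  have rx': "x' ! s = (u' ! s \<noteq> (Suc s < m \<and> (if Suc (Suc s) < m \<and> \<sigma> ! Suc s = L then x' ! Suc s else u' ! Suc s)))"
    if "s < m" for s using circ_rec[of u' \<sigma> s] lu' that by (simp add: x'_def m_def)
  have main: "\<forall>s. s < m \<longrightarrow> m - s \<le> d \<longrightarrow> x' ! s = (x ! s \<noteq> (s = Suc k))" for d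
  proof (induction d)
    case 0 then show ?case by auto
  next
    case (Suc d)
    show ?case
    proof (intro allI impI)
      fix s assume s: "s < m" "m - s \<le> Suc d"
      have IH: "Suc s < m \<Longrightarrow> x' ! Suc s = (x ! Suc s \<noteq> (Suc s = Suc k))"
        using Suc.IH s by auto
      consider "s > Suc k" | "s = Suc k" | "s = k" | "Suc s = k" | "Suc s < k" by linarith
      then show "x' ! s = (x ! s \<noteq> (s = Suc k))"
      proof cases
        case 1
        then show ?thesis using rx[OF s(1)] rx'[OF s(1)] IH u'n[OF s(1)] u'n[of "Suc s"] by auto
      next
        case 2
        then show ?thesis using rx[OF s(1)] rx'[OF s(1)] IH u'n[OF s(1)] u'n[of "Suc s"] by auto
      next
        case 3
        then show ?thesis using rx[OF s(1)] rx'[OF s(1)] IH u'n[OF s(1)] u'n[of "Suc s"] k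
          by (auto simp: m_def)
      next
        case 4
        then show ?thesis using rx[OF s(1)] rx'[OF s(1)] IH u'n[OF s(1)] L k by (auto simp: m_def)
      next
        case 5
        then show ?thesis using rx[OF s(1)] rx'[OF s(1)] IH u'n[OF s(1)] u'n[of "Suc s"] k
          by (auto simp: m_def)
      qed
    qed
  qed
  have "x' = x[Suc k := \<not> x ! Suc k]"
  proof (rule nth_equalityI)
    show "length x' = length (x[Suc k := \<not> x ! Suc k])" using lu lu' by (simp add: x_def x'_def m_def)
    fix s assume "s < length x'"
    then have "s < m" using lu' by (simp add: x'_def)
    then show "x' ! s = x[Suc k := \<not> x ! Suc k] ! s"
      using main[of "m - s"] lu k by (auto simp: x_def m_def nth_list_update)
  qed
  then show ?thesis by (simp add: x_def x'_def u'_def)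
qed

definition xr :: "bool list \<Rightarrow> nat \<Rightarrow> nat \<Rightarrow> bool" where
  "xr u a b = foldr (\<noteq>) (map (nth u) [a..<b]) False"

lemma xr_step: "a < b \<Longrightarrow> xr u a b = (u ! a \<noteq> xr u (Suc a) b)"
  unfolding xr_def by (simp add: upt_rec)

lemma xr_append: "b \<le> length pre \<Longrightarrow> xr (pre @ v) a b = xr pre a b"
  unfolding xr_def by (rule arg_cong[where f="\<lambda>l. foldr (\<noteq>) l False"]) (auto simp: nth_append)

lemma circ_obs:
  assumes lu: "length u = length \<sigma>" and r: "r < length \<sigma>" and R: "\<sigma> ! r = R"
    and Ls: "\<forall>i. j < i \<and> i < r \<longrightarrow> \<sigma> ! i = L" and j: "j < r"
  shows "circuit \<sigma> u ! j = (xr u j r \<noteq> u ! r)"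
  using j Ls
proof (induction "r - j" arbitrary: j)
  case 0 then show ?case by simp
next
  case (Suc d)
  have rj: "circuit \<sigma> u ! j = (u ! j \<noteq> (Suc j < length \<sigma> \<and>
            (if Suc (Suc j) < length \<sigma> \<and> \<sigma> ! Suc j = L then circuit \<sigma> u ! Suc j else u ! Suc j)))"
    using circ_rec[OF lu, of j] Suc r by simp
  show ?case
  proof (cases "Suc j = r")
    case True
    then have "r = Suc j" by simp
    then show ?thesis using rj R r by (simp add: xr_def)
  next
    case False
    then have "Suc j < r" using Suc by simp
    moreover have "circuit \<sigma> u ! Suc j = (xr u (Suc j) r \<noteq> u ! r)"
      using Suc.hyps(1)[of "Suc j"] Suc.hyps(2) Suc.prems \<open>Suc j < r\<close> by auto
    ultimately show ?thesis using rj Suc.prems r by (simp add: xr_step) blast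
  qed
qed



lemma map2_nth: "i < length Vs \<Longrightarrow> i < length x \<Longrightarrow> map2 (\<lambda>V xi. V xi) Vs x ! i = (Vs ! i) (x ! i)"
  by simp

lemma R_bound:
  fixes Vs :: "'z chout channel list"
  assumes lV: "length Vs = length \<sigma>" and j: "j < r" and r: "r < length \<sigma>"
    and obs: "\<And>u. length u = length \<sigma> \<Longrightarrow> circuit \<sigma> u ! j = (xr u j r \<noteq> u ! r)"
  shows "sym_cap (Vs ! j) \<le> sym_cap (synth \<sigma> Vs (Suc r))"
proof -
  define G :: "'z chout \<Rightarrow> bool list \<times> 'z chout" where
    "G z = (case z of Node zs pre \<Rightarrow> (pre, zs ! j) | Base b \<Rightarrow> undefined)" for z
  have eq: "map_pmf G (synth \<sigma> Vs (Suc r) a)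
          = bind_pmf (uniform_bits r) (\<lambda>pre. map_pmf (Pair pre) ((Vs ! j) (xr pre j r \<noteq> a)))" for a
  proof -
    have "map_pmf G (synth \<sigma> Vs (Suc r) a)
        = bind_pmf (uniform_bits r) (\<lambda>pre. bind_pmf (uniform_bits (length \<sigma> - Suc r)) (\<lambda>suf.
            map_pmf (Pair pre) (map_pmf (\<lambda>zs. zs ! j)
              (seq_pmf (map2 (\<lambda>V xi. V xi) Vs (circuit \<sigma> (pre @ [a] @ suf)))))))"
      unfolding synth_def Let_def by (simp add: map_bind_pmf map_pmf_comp G_def)
    also have "\<dots> = bind_pmf (uniform_bits r) (\<lambda>pre. bind_pmf (uniform_bits (length \<sigma> - Suc r)) (\<lambda>suf.
            map_pmf (Pair pre) ((Vs ! j) (xr pre j r \<noteq> a))))"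
    proof (intro bind_pmf_cong refl)
      fix pre suf assume "pre \<in> set_pmf (uniform_bits r)" "suf \<in> set_pmf (uniform_bits (length \<sigma> - Suc r))"
      then have lp: "length pre = r" and ls: "length suf = length \<sigma> - Suc r" by (auto simp: set_uniform_bits)
      define u where "u = pre @ [a] @ suf"
      have lu: "length u = length \<sigma>" using lp ls r by (simp add: u_def)
      have "circuit \<sigma> u ! j = (xr pre j r \<noteq> a)"
        using obs[OF lu] lp by (simp add: u_def xr_append nth_append)
      moreover have "map_pmf (\<lambda>zs. zs ! j) (seq_pmf (map2 (\<lambda>V xi. V xi) Vs (circuit \<sigma> u)))
                   = (Vs ! j) (circuit \<sigma> u ! j)"
        using seq_pmf_nth[of j "map2 (\<lambda>V xi. V xi) Vs (circuit \<sigma> u)"] lV lu j r by simp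
      ultimately show "map_pmf (Pair pre) (map_pmf (\<lambda>zs. zs ! j)
              (seq_pmf (map2 (\<lambda>V xi. V xi) Vs (circuit \<sigma> (pre @ [a] @ suf)))))
            = map_pmf (Pair pre) ((Vs ! j) (xr pre j r \<noteq> a))" by (simp add: u_def)
    qed
    also have "\<dots> = bind_pmf (uniform_bits r) (\<lambda>pre. map_pmf (Pair pre) ((Vs ! j) (xr pre j r \<noteq> a)))"
      by (simp add: bind_pmf_const)
    finally show ?thesis .
  qed
  have "sym_cap (Vs ! j) = sym_cap (\<lambda>a. bind_pmf (uniform_bits r) (\<lambda>pre. map_pmf (Pair pre) ((Vs ! j) (xr pre j r \<noteq> a))))"
    by (rule side_info_cap[symmetric])
  also have "\<dots> = sym_cap (\<lambda>a. map_pmf G (synth \<sigma> Vs (Suc r) a))" using eq by simp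
  also have "\<dots> \<le> sym_cap (synth \<sigma> Vs (Suc r))" by (rule dpi)
  finally show ?thesis .
qed



lemma map2_update:
  "i < length Vs \<Longrightarrow> map2 (\<lambda>V xi. V xi) Vs (x[i := v]) = (map2 (\<lambda>V xi. V xi) Vs x)[i := (Vs ! i) v]"
proof -
  assume i: "i < length Vs"
  have "zip Vs (x[i := v]) = zip (Vs[i := Vs ! i]) (x[i := v])" by simp
  also have "\<dots> = (zip Vs x)[i := (Vs ! i, v)]" by (rule zip_update)
  finally show ?thesis by (simp add: map_update)
qed

lemma L_bound:
  fixes Vs :: "'z chout channel list"
  assumes lV: "length Vs = length \<sigma>" and k: "Suc k < length \<sigma>" and L: "\<sigma> ! k = L"
  shows "sym_cap (synth \<sigma> Vs (Suc k)) \<le> sym_cap (Vs ! Suc k)"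
proof -
  define rr where "rr = length \<sigma> - Suc (Suc k)"
  have rr: "length \<sigma> - Suc k = Suc rr" using k by (simp add: rr_def)
  define V where "V = Vs ! Suc k"
  define X0 where "X0 pre e rest = circuit \<sigma> (pre @ [False] @ e # rest)" for pre e rest
  define PS where "PS pre e rest = map2 (\<lambda>V xi. V xi) Vs (X0 pre e rest)" for pre e rest
  define S where "S = bind_pmf (uniform_bits k) (\<lambda>pre. bind_pmf coin (\<lambda>e. bind_pmf (uniform_bits rr)
     (\<lambda>rest. map_pmf (\<lambda>zs. (pre, X0 pre e rest ! Suc k, zs)) (seq_pmf (PS pre e rest)))))"
  define F :: "(bool list \<times> bool \<times> 'z chout list) \<times> 'z chout \<Rightarrow> 'z chout" where
    "F sy = (case sy of ((pre, c, zs), y) \<Rightarrow> Node (zs[Suc k := y]) pre)" for sy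
  define J where "J a = bind_pmf S (\<lambda>s. map_pmf (Pair s) (V (fst (snd s) \<noteq> a)))" for a
  have circ: "circuit \<sigma> (pre @ [a] @ (e \<noteq> a) # rest) = (X0 pre e rest)[Suc k := (X0 pre e rest ! Suc k \<noteq> a)]"
    if "length pre = k" "length rest = rr" for pre e rest a
  proof (cases a)
    case False then show ?thesis by (simp add: X0_def)
  next
    case True
    have "pre @ [a] @ (e \<noteq> a) # rest = (pre @ [False] @ e # rest)[k := \<not> (pre @ [False] @ e # rest) ! k,
              Suc k := \<not> (pre @ [False] @ e # rest) ! Suc k]"
      using that True by (simp add: list_update_append nth_append)
    moreover have "length (pre @ [False] @ e # rest) = length \<sigma>" using that k by (simp add: rr_def)
    ultimately show ?thesis using circ_flip[of "pre @ [False] @ e # rest" \<sigma> k] k L True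
      by (simp add: X0_def)
  qed
  have eq: "synth \<sigma> Vs (Suc k) a = map_pmf F (J a)" for a
  proof -
    have "synth \<sigma> Vs (Suc k) a = bind_pmf (uniform_bits k) (\<lambda>pre. bind_pmf (uniform_bits (Suc rr)) (\<lambda>suf.
            map_pmf (\<lambda>zs. Node zs pre) (seq_pmf (map2 (\<lambda>V xi. V xi) Vs (circuit \<sigma> (pre @ [a] @ suf))))))"
      unfolding synth_def Let_def rr by simp
    also have "\<dots> = bind_pmf (uniform_bits k) (\<lambda>pre. bind_pmf coin (\<lambda>e0. bind_pmf (uniform_bits rr) (\<lambda>rest.
            map_pmf (\<lambda>zs. Node zs pre) (seq_pmf (map2 (\<lambda>V xi. V xi) Vs (circuit \<sigma> (pre @ [a] @ e0 # rest)))))))"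
      by (simp add: uniform_bits_Suc bind_map_pmf bind_assoc_pmf)
    also have "\<dots> = bind_pmf (uniform_bits k) (\<lambda>pre. bind_pmf coin (\<lambda>e. bind_pmf (uniform_bits rr) (\<lambda>rest.
            map_pmf (\<lambda>zs. Node zs pre) (seq_pmf (map2 (\<lambda>V xi. V xi) Vs (circuit \<sigma> (pre @ [a] @ (e \<noteq> a) # rest)))))))"
      by (subst coin_shift[symmetric, of _ a]) simp
    also have "\<dots> = bind_pmf (uniform_bits k) (\<lambda>pre. bind_pmf coin (\<lambda>e. bind_pmf (uniform_bits rr) (\<lambda>rest.
            map_pmf (\<lambda>zs. Node zs pre) (bind_pmf (seq_pmf (PS pre e rest))
              (\<lambda>zs. map_pmf (\<lambda>y. zs[Suc k := y]) (V (X0 pre e rest ! Suc k \<noteq> a)))))))"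
    proof (intro bind_pmf_cong refl)
      fix pre e rest assume "pre \<in> set_pmf (uniform_bits k)" "rest \<in> set_pmf (uniform_bits rr)"
      then have lp: "length pre = k" and lr: "length rest = rr" by (auto simp: set_uniform_bits)
      have lX: "length (X0 pre e rest) = length \<sigma>" using lp lr k by (simp add: X0_def rr_def)
      have "map2 (\<lambda>V xi. V xi) Vs (circuit \<sigma> (pre @ [a] @ (e \<noteq> a) # rest))
          = (PS pre e rest)[Suc k := V (X0 pre e rest ! Suc k \<noteq> a)]"
        unfolding circ[OF lp lr] PS_def V_def using lV k by (simp add: map2_update)
      moreover have "Suc k < length (PS pre e rest)" using lV lX k by (simp add: PS_def)
      ultimately show "map_pmf (\<lambda>zs. Node zs pre) (seq_pmf (map2 (\<lambda>V xi. V xi) Vs (circuit \<sigma> (pre @ [a] @ (e \<noteq> a) # rest))))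
          = map_pmf (\<lambda>zs. Node zs pre) (bind_pmf (seq_pmf (PS pre e rest))
              (\<lambda>zs. map_pmf (\<lambda>y. zs[Suc k := y]) (V (X0 pre e rest ! Suc k \<noteq> a))))"
        by (simp add: seq_pmf_update)
    qed
    also have "\<dots> = map_pmf F (J a)"
      unfolding J_def S_def F_def
      by (simp add: map_bind_pmf bind_map_pmf bind_assoc_pmf map_pmf_comp)
    finally show ?thesis .
  qed
  have "sym_cap (synth \<sigma> Vs (Suc k)) = sym_cap (\<lambda>a. map_pmf F (J a))" using eq by presburger
  also have "\<dots> \<le> sym_cap J" by (rule dpi)
  also have "\<dots> = sym_cap V" unfolding J_def by (rule side_info_cap)
  finally show ?thesis by (simp add: V_def)
qed



lemma concat_pairs_len: "length (concat (map (\<lambda>j. [f j, h j]) xs)) = 2 * length xs"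
  by (induction xs) auto

lemma concat_pairs_nth:
  "s < n \<Longrightarrow> concat (map (\<lambda>j. [f j, h j]) [a..<a+n]) ! (2 * s) = f (a+s)
          \<and> concat (map (\<lambda>j. [f j, h j]) [a..<a+n]) ! (2 * s + 1) = h (a+s)"
proof (induction n)
  case 0 then show ?case by simp
next
  case (Suc n)
  have sp: "concat (map (\<lambda>j. [f j, h j]) [a..<a+Suc n])
          = concat (map (\<lambda>j. [f j, h j]) [a..<a+n]) @ [f (a+n), h (a+n)]" by simp
  show ?case
  proof (cases "s < n")
    case True then show ?thesis using Suc unfolding sp by (simp add: nth_append concat_pairs_len)
  next
    case False then have "s = n" using Suc by simp
    then show ?thesis unfolding sp by (simp add: nth_append concat_pairs_len)
  qed
qed

lemma pattern_len: "g \<le> b \<Longrightarrow> length (pattern b g) = b + g"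
proof -
  have "length (concat (replicate g [L, R])) = 2 * g" by (induction g) auto
  then show "g \<le> b \<Longrightarrow> ?thesis" by (simp add: pattern_def)
qed

lemma pairs_nth: "i < 2 * g \<Longrightarrow> concat (replicate g [L, R]) ! i = (if even i then L else R)"
proof (induction g arbitrary: i)
  case 0 then show ?case by simp
next
  case (Suc g)
  show ?case
  proof (cases i)
    case 0 then show ?thesis by simp
  next
    case (Suc i') note s = this
    show ?thesis
    proof (cases i')
      case 0 then show ?thesis using s by simp
    next
      case (Suc i'') then show ?thesis using Suc.IH[of i''] Suc.prems s by simp
    qed
  qed
qed

lemma pattern_nth:
  assumes "g \<le> b" "i < b + g"
  shows "pattern b g ! i = (if i < b - g then L else if even (i - (b - g)) then L else R)"
proof -
  have "length (replicate (b - g) L) = b - g" by simp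
  then show ?thesis using assms pairs_nth[of "i - (b - g)" g]
    by (auto simp: pattern_def nth_append)
qed

definition fpat :: "nat \<Rightarrow> nat \<Rightarrow> LR" where
  "fpat P k = (if k - 1 < P then L else if even (k - 1 - P) then L else R)"

lemma filter_fpat:
  "filter (\<lambda>k. fpat P k = L) [1..<P + 2 * g + 1] = [1..<P+1] @ map (\<lambda>t. P + 2*t + 1) [0..<g]
 \<and> filter (\<lambda>k. fpat P k = R) [1..<P + 2 * g + 1] = map (\<lambda>t. P + 2*t + 2) [0..<g]"
proof (induction g)
  case 0
  have "filter (\<lambda>k. fpat P k = L) [1..<P + 1] = [1..<P+1]"
    by (rule filter_True) (auto simp: fpat_def)
  moreover have "filter (\<lambda>k. fpat P k = R) [1..<P + 1] = []"
    by (rule filter_False) (auto simp: fpat_def)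
  ultimately show ?case by simp
next
  case (Suc g)
  have sp: "[1..<P + 2 * Suc g + 1] = [1..<P + 2 * g + 1] @ [P + 2*g + 1, P + 2*g + 2]"
    by (simp add: upt_rec[of "P + 2 * g + 1"] upt_add_eq_append[symmetric])
  have f1: "fpat P (P + 2*g + 1) = L" and f2: "fpat P (P + 2*g + 2) = R" by (auto simp: fpat_def)
  show ?case unfolding sp using Suc f1 f2 by simp
qed



theorem mainTheorem7:
  fixes b g n :: nat and W :: "'z channel"
  assumes "1 \<le> g" and "g \<le> b" and "1 \<le> n"
  shows "(\<forall>i. 1 \<le> i \<and> i \<le> b \<longrightarrow>
            sym_cap (Lch b g W (Suc n) i) \<le> sym_cap (Lch b g W n i))
       \<and> sym_cap (Rch b g W (Suc n) 1) \<ge> sym_cap (Rch b g W n g)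
       \<and> (\<forall>j. 1 < j \<and> j \<le> g \<longrightarrow>
            sym_cap (Rch b g W (Suc n) j) \<ge> sym_cap (Rch b g W n (j - 1)))"
proof -
  note g1 = assms(1) and gb = assms(2)
  define P where "P = b - g"
  define m where "m = b + g"
  define \<sigma> where "\<sigma> = pattern b g"
  define Ls where "Ls = fst (level b g W n)"
  define Rs where "Rs = snd (level b g W n)"
  define Vs where "Vs = next_inputs b g (level b g W n)"
  have mP: "m = P + 2 * g" using gb by (simp add: m_def P_def)
  have lsig: "length \<sigma> = m" using gb by (simp add: \<sigma>_def m_def pattern_len)
  have hsig: "\<sigma> ! (k - 1) = fpat P k" if "1 \<le> k" "k \<le> m" for k
    using that gb pattern_nth[of g b "k - 1"] by (auto simp: \<sigma>_def fpat_def P_def m_def)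
  have hsig0: "\<sigma> ! i = fpat P (Suc i)" if "i < m" for i using hsig[of "Suc i"] that by simp
  have Lidx: "filter (\<lambda>k. \<sigma> ! (k - 1) = L) [1..<m + 1] = [1..<P+1] @ map (\<lambda>t. P + 2*t + 1) [0..<g]"
  proof -
    have "filter (\<lambda>k. \<sigma> ! (k - 1) = L) [1..<m + 1] = filter (\<lambda>k. fpat P k = L) [1..<P + 2 * g + 1]"
      unfolding mP[symmetric]
    proof (rule filter_cong[OF refl])
      fix k assume "k \<in> set [1..<m + 1]"
      then have "1 \<le> k" "k \<le> m" by auto
      then show "(\<sigma> ! (k - 1) = L) = (fpat P k = L)" using hsig by simp
    qed
    then show ?thesis using filter_fpat[of P g] by simp
  qed
  have Ridx: "filter (\<lambda>k. \<sigma> ! (k - 1) = R) [1..<m + 1] = map (\<lambda>t. P + 2*t + 2) [0..<g]"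
  proof -
    have "filter (\<lambda>k. \<sigma> ! (k - 1) = R) [1..<m + 1] = filter (\<lambda>k. fpat P k = R) [1..<P + 2 * g + 1]"
      unfolding mP[symmetric]
    proof (rule filter_cong[OF refl])
      fix k assume "k \<in> set [1..<m + 1]"
      then have "1 \<le> k" "k \<le> m" by auto
      then show "(\<sigma> ! (k - 1) = R) = (fpat P k = R)" using hsig by simp
    qed
    then show ?thesis using filter_fpat[of P g] by simp
  qed
  have lev: "level b g W (Suc n) = apply_circuit \<sigma> Vs" by (simp add: \<sigma>_def Vs_def)
  have Vdef: "Vs = [Rs ! (g - 1)] @ map (\<lambda>i. Ls ! (i - 1)) [1..<P + 2]
                 @ concat (map (\<lambda>j. [Rs ! (j - 1), Ls ! (P + j)]) [1..<1 + (g - 1)])"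
    using g1 by (simp add: Vs_def next_inputs_def Let_def Ls_def Rs_def P_def)
  have lV: "length Vs = length \<sigma>" unfolding lsig Vdef using g1 mP by (simp add: concat_pairs_len) presburger
  have V0: "Vs ! 0 = Rs ! (g - 1)" unfolding Vdef by simp
  have VL: "Vs ! i = Ls ! (i - 1)" if ih: "1 \<le> i" "i \<le> P + 1" for i
  proof -
    obtain i' where i': "i = Suc i'" using ih by (cases i) auto
    have "Vs ! i = (map (\<lambda>i. Ls ! (i - 1)) [1..<P + 2]
          @ concat (map (\<lambda>j. [Rs ! (j - 1), Ls ! (P + j)]) [1..<1 + (g - 1)])) ! i'"
      unfolding Vdef i' by simp
    also have "\<dots> = map (\<lambda>i. Ls ! (i - 1)) [1..<P + 2] ! i'"
      using ih i' by (simp add: nth_append del: upt_Suc)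
    also have "\<dots> = Ls ! (i - 1)" using ih i' by (simp del: upt_Suc)
    finally show ?thesis .
  qed
  have VP: "Vs ! (P + 2 + 2 * s) = Rs ! s \<and> Vs ! (P + 3 + 2 * s) = Ls ! (P + 1 + s)" if "s < g - 1" for s
  proof -
    have c: "concat (map (\<lambda>j. [Rs ! (j - 1), Ls ! (P + j)]) [1..<1 + (g - 1)]) ! (2 * s) = Rs ! s
          \<and> concat (map (\<lambda>j. [Rs ! (j - 1), Ls ! (P + j)]) [1..<1 + (g - 1)]) ! (2 * s + 1) = Ls ! (P + 1 + s)"
      using concat_pairs_nth[OF that, of "\<lambda>j. Rs ! (j - 1)" "\<lambda>j. Ls ! (P + j)" 1] by simp
    have e1: "P + 2 + 2 * s = Suc (P + 1) + 2 * s" and e2: "P + 3 + 2 * s = Suc (P + 1) + (2 * s + 1)" by simp_all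
    show ?thesis unfolding Vdef e1 e2 using c by (simp add: nth_append del: upt_Suc)
  qed
  have lLidx: "length ([1..<P+1] @ map (\<lambda>t. P + 2*t + 1) [0..<g]) = b" using gb by (simp add: P_def) linarith
  have LchS: "Lch b g W (Suc n) i = synth \<sigma> Vs (([1..<P+1] @ map (\<lambda>t. P + 2*t + 1) [0..<g]) ! (i - 1))"
    if "1 \<le> i" "i \<le> b" for i
    unfolding Lch_def lev apply_circuit_def lsig Lidx fst_conv
    by (rule nth_map) (use that lLidx in simp)
  have RchS: "Rch b g W (Suc n) j = synth \<sigma> Vs (P + 2 * (j - 1) + 2)" if "1 \<le> j" "j \<le> g" for j
    unfolding Rch_def lev apply_circuit_def lsig Ridx snd_conv
    using that by simp
  have part1: "sym_cap (Lch b g W (Suc n) i) \<le> sym_cap (Lch b g W n i)" if i: "1 \<le> i" "i \<le> b" for i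
  proof (cases "i \<le> P")
    case True
    have idx: "([1..<P+1] @ map (\<lambda>t. P + 2*t + 1) [0..<g]) ! (i - 1) = Suc (i - 1)"
      using True i by (auto simp add: nth_append simp del: upt_Suc)
    have "sym_cap (synth \<sigma> Vs (Suc (i - 1))) \<le> sym_cap (Vs ! Suc (i - 1))"
      by (rule L_bound[OF lV]) (use True i mP lsig hsig0[of "i - 1"] g1 in \<open>auto simp: fpat_def\<close>)
    then show ?thesis using LchS[OF i] idx VL[of i] True i by (simp add: Lch_def Ls_def)
  next
    case False
    define t where "t = i - 1 - P"
    have t: "t < g" "i - 1 = P + t" using False i gb by (auto simp: t_def P_def)
    have idx: "([1..<P+1] @ map (\<lambda>t. P + 2*t + 1) [0..<g]) ! (i - 1) = Suc (P + 2 * t)"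
      using t by (simp add: nth_append)
    have "sym_cap (synth \<sigma> Vs (Suc (P + 2 * t))) \<le> sym_cap (Vs ! Suc (P + 2 * t))"
      by (rule L_bound[OF lV]) (use t mP lsig hsig0[of "P + 2 * t"] in \<open>auto simp: fpat_def\<close>)
    moreover have "Vs ! Suc (P + 2 * t) = Ls ! (i - 1)"
    proof (cases t)
      case 0 then show ?thesis using VL[of "P + 1"] t by simp
    next
      case (Suc t')
      then have tg: "t' < g - 1" using t by simp
      have e1: "Suc (P + 2 * t) = P + 3 + 2 * t'" and e2: "i - 1 = P + 1 + t'" using Suc t by simp_all
      show ?thesis unfolding e1 e2 by (rule conjunct2[OF VP[OF tg]])
    qed
    ultimately show ?thesis using LchS[OF i] idx by (simp add: Lch_def Ls_def)
  qed
  have part2: "sym_cap (Rch b g W (Suc n) 1) \<ge> sym_cap (Rch b g W n g)"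
  proof -
    have Pm: "P + 1 < length \<sigma>" using lsig mP g1 by simp
    have sR: "\<sigma> ! (P + 1) = R"
    proof -
      have "\<sigma> ! (P + 1) = fpat P (Suc (P + 1))" using hsig0[of "P + 1"] Pm lsig by simp
      also have "\<dots> = R" by (simp add: fpat_def)
      finally show ?thesis .
    qed
    have sL: "\<forall>i. 0 < i \<and> i < P + 1 \<longrightarrow> \<sigma> ! i = L"
    proof (intro allI impI)
      fix i assume a: "0 < i \<and> i < P + 1"
      then have "i < m" using Pm lsig by simp
      then have "\<sigma> ! i = fpat P (Suc i)" by (rule hsig0)
      also have "\<dots> = L" using a by (simp add: fpat_def)
      finally show "\<sigma> ! i = L" .
    qed
    have "sym_cap (Vs ! 0) \<le> sym_cap (synth \<sigma> Vs (Suc (P + 1)))"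
    proof (rule R_bound[OF lV])
      show "0 < P + 1" by simp
      show "P + 1 < length \<sigma>" by (rule Pm)
      fix u :: "bool list" assume lu: "length u = length \<sigma>"
      show "circuit \<sigma> u ! 0 = (xr u 0 (P + 1) \<noteq> u ! (P + 1))"
        by (rule circ_obs[OF lu Pm sR sL]) simp
    qed
    moreover have "Rch b g W (Suc n) 1 = synth \<sigma> Vs (Suc (P + 1))" using RchS[of 1] g1 by simp
    moreover have "Rch b g W n g = Rs ! (g - 1)" by (simp add: Rch_def Rs_def)
    ultimately show ?thesis using V0 by simp
  qed
  have part3: "sym_cap (Rch b g W (Suc n) j) \<ge> sym_cap (Rch b g W n (j - 1))" if j: "1 < j" "j \<le> g" for j
  proof -
    define t where "t = j - 1"
    have t: "1 \<le> t" "t < g" "j = Suc t" using j by (auto simp: t_def)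
    have rm: "P + 2 * t + 1 < length \<sigma>" using lsig mP t by simp
    have sR: "\<sigma> ! (P + 2 * t + 1) = R"
    proof -
      have "\<sigma> ! (P + 2 * t + 1) = fpat P (Suc (P + 2 * t + 1))" using hsig0[of "P + 2 * t + 1"] rm lsig by simp
      also have "\<dots> = R" by (simp add: fpat_def)
      finally show ?thesis .
    qed
    have sL: "\<forall>i. P + 2 * t < i \<and> i < P + 2 * t + 1 \<longrightarrow> \<sigma> ! i = L" by auto
    have "sym_cap (Vs ! (P + 2 * t)) \<le> sym_cap (synth \<sigma> Vs (Suc (P + 2 * t + 1)))"
    proof (rule R_bound[OF lV])
      show "P + 2 * t < P + 2 * t + 1" by simp
      show "P + 2 * t + 1 < length \<sigma>" by (rule rm)
      fix u :: "bool list" assume lu: "length u = length \<sigma>"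
      show "circuit \<sigma> u ! (P + 2 * t) = (xr u (P + 2 * t) (P + 2 * t + 1) \<noteq> u ! (P + 2 * t + 1))"
        by (rule circ_obs[OF lu rm sR sL]) simp
    qed
    moreover have "Vs ! (P + 2 * t) = Rs ! (t - 1)"
    proof -
      have tg: "t - 1 < g - 1" using t by simp
      have e: "P + 2 * t = P + 2 + 2 * (t - 1)" using t by simp
      show ?thesis unfolding e by (rule conjunct1[OF VP[OF tg]])
    qed
    moreover have "Rch b g W (Suc n) j = synth \<sigma> Vs (Suc (P + 2 * t + 1))"
    proof -
      have "P + 2 * (j - 1) + 2 = Suc (P + 2 * t + 1)" using t by simp
      then show ?thesis using RchS[of j] j by simp
    qed
    moreover have "Rch b g W n (j - 1) = Rs ! (t - 1)" by (simp add: Rch_def Rs_def t_def)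
    ultimately show ?thesis by simp
  qed
  show ?thesis using part1 part2 part3 by blast
qed


end
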